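(* Let $\mathfrak{D}\subset(\mathbb{C}\setminus\{0\})^{12}$, with coordinates $(w,w',w'',x,x',x'',y,y',y'',z,z',z'')$, be the variety defined by $1=t(1-t'')$, $1=t'(1-t)$, $1=t''(1-t')$ for each $t\in\{w,x,y,z\}$, together with $1=wxyz$, $1=w'x'y'z'(w'')^2(x'')^2$ and $1=w'x'y'z'(y'')^2(z'')^2$. Let $\overline{\mathfrak{C}}\subset(\mathbb{C}\setminus\{0\})^2\times\mathbb{C}$ be the hypersurface in coordinates $(\bar s,\bar u,d)$ defined by $$0=\bar s\bar u(\bar s-1)(\bar u-1)+d\,(1-\bar s-\bar u+4\bar s\bar u-\bar s^2\bar u-\bar s\bar u^2+\bar s^2\bar u^2)+d^2(2-\bar s-\bar u+2\bar s\bar u)+d^3,$$ and let $\bar e:\overline{\mathfrak{C}}\to(\mathbb{C}\setminus\{0\})^4$ be $\bar e(\bar s,\bar u,d)=(\bar s,t,\bar u,v)$ with $$t=\bar s^{-1}-\bar s^{-1}\bar u+\bar u+d\,(2\bar s^{-1}+\bar s^{-2}\bar u^{-1}-\bar s^{-2})+d^2\bar s^{-2}\bar u^{-1},$$ $$v=\bar u^{-1}-\bar u^{-1}\bar s+\bar s+d\,(2\bar u^{-1}+\bar u^{-2}\bar s^{-1}-\bar u^{-2})+d^2\bar u^{-2}\bar s^{-1}.$$ Let $\overline{\mathfrak{E}}_0$ be the Zariski closure of $\bar e(\overline{\mathfrak{C}})$ in $(\mathbb{C}\setminus\{0\})^4$. Then the map $\Psi:\mathfrak{D}\to\overline{\mathfrak{E}}_0$,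 $$\Psi(w,w',w'',x,x',x'',y,y',y'',z,z',z'')=\Big(\frac{x'z''}{y},\ xy,\ \frac{w'z''}{y},\ wy\Big),$$ is a birational isomorphism.
   Context: $\mathfrak{D}$ is the deformation variety of the standard four-tetrahedron ideal triangulation of the complement $W$ of the right-handed Whitehead link. $\overline{\mathfrak{C}}$ parametrises representations $\mathcal{M}_0\mapsto\begin{pmatrix}\bar s&d\\0&1\end{pmatrix}$, $\mathcal{M}_1\mapsto\begin{pmatrix}\bar u&0\\1&1\end{pmatrix}$ of $\pi_1(W)=\langle\mathcal{M}_0,\mathcal{M}_1\mid \mathcal{M}_1\mathcal{M}_0\mathcal{M}_1\mathcal{M}_0^{-1}\mathcal{M}_1^{-1}\mathcal{M}_0^{-1}\mathcal{M}_1\mathcal{M}_0=\mathcal{M}_0\mathcal{M}_1\mathcal{M}_0^{-1}\mathcal{M}_1^{-1}\mathcal{M}_0^{-1}\mathcal{M}_1\mathcal{M}_0\mathcal{M}_1\rangle$ into $GL_2(\mathbb{C})$ (meridians $\mathcal{M}_0,\mathcal{M}_1$), and $t,v$ are the upper-left entries of the images of the null-homologous longitudes $\mathcal{L}_0^t=\mathcal{M}_0^{-1}\mathcal{M}_1\mathcal{M}_0\mathcal{M}_1^{-1}\mathcal{M}_0^{-1}\mathcal{M}_1^{-1}\mathcal{M}_0\mathcal{M}_1$ and $\mathcal{L}_1^t=\mathcal{M}_1^{-1}\mathcal{M}_0\mathcal{M}_1\mathcal{M}_0^{-1}\mathcal{M}_1^{-1}\mathcal{M}_0^{-1}\mathcal{M}_1\mathcal{M}_0$.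 The variety $\overline{\mathfrak{E}}_0$ is the component of the $PSL_2(\mathbb{C})$-eigenvalue variety of $W$ corresponding to the Dehn surgery component of the character variety, in coordinates (square of meridian eigenvalue, longitude eigenvalue) on each cusp. *)

theory Defs
  imports Complex_Main
begin

inductive poly_fun :: "nat \<Rightarrow> (complex list \<Rightarrow> complex) \<Rightarrow> bool" for n :: nat where
  pf_const: "poly_fun n (\<lambda>_. c)"
| pf_var: "i < n \<Longrightarrow> poly_fun n (\<lambda>x. x ! i)"
| pf_add: "poly_fun n p \<Longrightarrow> poly_fun n q \<Longrightarrow> poly_fun n (\<lambda>x. p x + q x)"
| pf_mult: "poly_fun n p \<Longrightarrow> poly_fun n q \<Longrightarrow> poly_fun n (\<lambda>x. p x * q x)"

definition torus :: "nat \<Rightarrow> complex list set" where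
  "torus n = {x. length x = n \<and> (\<forall>i<n. x ! i \<noteq> 0)}"

definition zero_set :: "nat \<Rightarrow> (complex list \<Rightarrow> complex) set \<Rightarrow> complex list set" where
  "zero_set n P = {x. length x = n \<and> (\<forall>p\<in>P. p x = 0)}"

definition vanishing_polys :: "nat \<Rightarrow> complex list set \<Rightarrow> (complex list \<Rightarrow> complex) set" where
  "vanishing_polys n S = {p. poly_fun n p \<and> (\<forall>x\<in>S. p x = 0)}"

definition zclosure :: "nat \<Rightarrow> complex list set \<Rightarrow> complex list set" where
  "zclosure n S = torus n \<inter> zero_set n (vanishing_polys n S)"

definition zclosed :: "nat \<Rightarrow> complex list set \<Rightarrow> bool" where
  "zclosed n C \<longleftrightarrow> (\<exists>P. (\<forall>p\<in>P. poly_fun n p) \<and> C = torus n \<inter> zero_set n P)"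

definition open_dense_in :: "nat \<Rightarrow> complex list set \<Rightarrow> complex list set \<Rightarrow> bool" where
  "open_dense_in n U X \<longleftrightarrow> (\<exists>C. zclosed n C \<and> U = X - C) \<and> X \<subseteq> zclosure n U"

definition rational_on :: "nat \<Rightarrow> nat \<Rightarrow> complex list set \<Rightarrow> (complex list \<Rightarrow> complex list) \<Rightarrow> bool" where
  "rational_on n m A g \<longleftrightarrow> (\<exists>ps qs. length ps = m \<and> length qs = m \<and>
     (\<forall>i<m. poly_fun n (ps ! i) \<and> poly_fun n (qs ! i) \<and> (\<forall>x\<in>A. (qs ! i) x \<noteq> 0)) \<and>
     (\<forall>x\<in>A. g x = map (\<lambda>i. (ps ! i) x / (qs ! i) x) [0..<m]))"

definition birational_iso :: "nat \<Rightarrow> complex list set \<Rightarrow> nat \<Rightarrow> complex list set \<Rightarrow>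
    (complex list \<Rightarrow> complex list) \<Rightarrow> bool" where
  "birational_iso n X m Y f \<longleftrightarrow> f ` X \<subseteq> Y \<and>
     (\<exists>U V g. open_dense_in n U X \<and> open_dense_in m V Y \<and> bij_betw f U V \<and>
        rational_on n m U f \<and> rational_on m n V g \<and>
        (\<forall>x\<in>U. g (f x) = x) \<and> (\<forall>y\<in>V. f (g y) = y))"

definition shape_eqs :: "complex \<Rightarrow> complex \<Rightarrow> complex \<Rightarrow> bool" where
  "shape_eqs t t' t'' \<longleftrightarrow> 1 = t * (1 - t'') \<and> 1 = t' * (1 - t) \<and> 1 = t'' * (1 - t')"

definition Dvar :: "complex list set" where
  "Dvar = {[w,w',w'',x,x',x'',y,y',y'',z,z',z''] | w w' w'' x x' x'' y y' y'' z z' z''.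
     [w,w',w'',x,x',x'',y,y',y'',z,z',z''] \<in> torus 12 \<and>
     shape_eqs w w' w'' \<and> shape_eqs x x' x'' \<and> shape_eqs y y' y'' \<and> shape_eqs z z' z'' \<and>
     1 = w * x * y * z \<and>
     1 = w' * x' * y' * z' * w''^2 * x''^2 \<and>
     1 = w' * x' * y' * z' * y''^2 * z''^2}"

definition Cbar :: "(complex \<times> complex \<times> complex) set" where
  "Cbar = {(s,u,d). s \<noteq> 0 \<and> u \<noteq> 0 \<and>
     0 = s*u*(s-1)*(u-1)
       + d*(1 - s - u + 4*s*u - s^2*u - s*u^2 + s^2*u^2)
       + d^2*(2 - s - u + 2*s*u) + d^3}"

definition ebar :: "complex \<times> complex \<times> complex \<Rightarrow> complex list" where
  "ebar = (\<lambda>(s,u,d).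
     [s,
      inverse s - inverse s * u + u + d*(2*inverse s + inverse (s^2) * inverse u - inverse (s^2))
        + d^2 * inverse (s^2) * inverse u,
      u,
      inverse u - inverse u * s + s + d*(2*inverse u + inverse (u^2) * inverse s - inverse (u^2))
        + d^2 * inverse (u^2) * inverse s])"

definition E0bar :: "complex list set" where
  "E0bar = zclosure 4 (ebar ` Cbar)"

definition Psi :: "complex list \<Rightarrow> complex list" where
  "Psi p = [p!4 * p!11 / p!6, p!3 * p!6, p!1 * p!11 / p!6, p!0 * p!6]"

end

theory Submission
  imports Defs "HOL-Computational_Algebra.Fundamental_Theorem_Algebra"
begin


lemma cubic_root_exists:
  fixes a b c :: complex
  shows "\<exists>r. r^3 + a*r^2 + b*r + c = 0"
proof -
  have "degree [:c,b,a,1:] = 3" by simp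
  then have "\<not> constant (poly [:c,b,a,1:])" by (simp add: constant_degree)
  from fundamental_theorem_of_algebra[OF this] obtain z where "poly [:c,b,a,1:] z = 0" by blast
  then show ?thesis by (auto simp: algebra_simps power2_eq_square power3_eq_cube)
qed

lemma cubic_root_near:
  fixes a b c z :: complex
  shows "\<exists>r. r^3 + a*r^2 + b*r + c = 0 \<and> norm (z - r) ^ 3 \<le> norm (z^3 + a*z^2 + b*z + c)"
proof -
  obtain r1 where r1: "r1^3 + a*r1^2 + b*r1 + c = 0" using cubic_root_exists by blast
  define p where "p = a + r1"
  define q where "q = b + r1*(a+r1)"
  define r2 where "r2 = (-p + csqrt (p^2 - 4*q))/2"
  define r3 where "r3 = (-p - csqrt (p^2 - 4*q))/2"
  have fac2: "\<And>x. x^2 + p*x + q = (x - r2)*(x - r3)"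
  proof -
    fix x
    have "(csqrt (p^2 - 4*q))^2 = p^2 - 4*q" by simp
    then show "x^2 + p*x + q = (x - r2)*(x - r3)"
      unfolding r2_def r3_def by (simp add: field_simps power2_eq_square)
  qed
  have fac: "\<And>x. x^3 + a*x^2 + b*x + c = (x - r1)*(x - r2)*(x - r3)"
  proof -
    fix x
    have "x^3 + a*x^2 + b*x + c = (x - r1)*(x^2 + p*x + q)"
      using r1 unfolding p_def q_def by algebra
    then show "x^3 + a*x^2 + b*x + c = (x - r1)*(x - r2)*(x - r3)" using fac2 by simp
  qed
  have nz: "norm (z^3 + a*z^2 + b*z + c) = norm (z - r1) * norm (z - r2) * norm (z - r3)"
    by (simp add: fac norm_mult)
  have key: "\<And>x y w::real. 0 \<le> x \<Longrightarrow> x \<le> y \<Longrightarrow> x \<le> w \<Longrightarrow> x^3 \<le> x*y*w"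
    unfolding power3_eq_cube by (intro mult_mono) auto
  let ?n1 = "norm (z - r1)" and ?n2 = "norm (z - r2)" and ?n3 = "norm (z - r3)"
  have "(?n1 \<le> ?n2 \<and> ?n1 \<le> ?n3) \<or> (?n2 \<le> ?n1 \<and> ?n2 \<le> ?n3) \<or> (?n3 \<le> ?n1 \<and> ?n3 \<le> ?n2)"
    by linarith
  moreover have "r2^3 + a*r2^2 + b*r2 + c = 0" "r3^3 + a*r3^2 + b*r3 + c = 0" by (simp_all add: fac)
  ultimately show ?thesis
    using key[of ?n1 ?n2 ?n3] key[of ?n2 ?n1 ?n3] key[of ?n3 ?n1 ?n2] r1 nz
    by (auto simp: mult_ac)
qed



lemma pf_diff: "poly_fun n p \<Longrightarrow> poly_fun n q \<Longrightarrow> poly_fun n (\<lambda>x. p x - q x)"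
proof -
  assume "poly_fun n p" "poly_fun n q"
  then have "poly_fun n (\<lambda>x. p x + (\<lambda>_. -1) x * q x)"
    by (intro poly_fun.pf_add poly_fun.pf_mult poly_fun.pf_const)
  then show ?thesis by simp
qed

lemma pf_power: "poly_fun n p \<Longrightarrow> poly_fun n (\<lambda>x. p x ^ k)"
proof (induction k)
  case 0 then show ?case using poly_fun.pf_const[of n 1] by simp
next
  case (Suc k)
  then have "poly_fun n (\<lambda>x. p x * p x ^ k)" by (intro poly_fun.pf_mult)
  then show ?case by simp
qed

lemmas pf_intros = poly_fun.pf_add poly_fun.pf_mult pf_diff pf_power poly_fun.pf_const poly_fun.pf_var

lemma poly_fun_tendsto:
  assumes "poly_fun n P" "\<forall>i<n. ((\<lambda>e. f e ! i) \<longlongrightarrow> x ! i) F"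
  shows "((\<lambda>e. P (f e)) \<longlongrightarrow> P x) F"
  using assms by (induction rule: poly_fun.induct) (auto intro!: tendsto_intros)

lemma lim_zero_eventually:
  fixes g :: "complex \<Rightarrow> complex"
  assumes "(g \<longlongrightarrow> L) (at 0)" "eventually (\<lambda>e. g e = 0) (at 0)"
  shows "L = 0"
proof -
  have "(g \<longlongrightarrow> 0) (at 0)" using assms(2) by (rule tendsto_eventually)
  then show ?thesis using assms(1) tendsto_unique[OF at_neq_bot] by blast
qed

lemma less12: "i < (12::nat) \<Longrightarrow> i = 0 \<or> i = 1 \<or> i = 2 \<or> i = 3 \<or> i = 4 \<or> i = 5 \<or> i = 6 \<or> i = 7 \<or> i = 8 \<or> i = 9 \<or> i = 10 \<or> i = 11"
  by arith
lemma less4: "i < (4::nat) \<Longrightarrow> i = 0 \<or> i = 1 \<or> i = 2 \<or> i = 3"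
  by arith

definition mk :: "complex \<Rightarrow> complex \<Rightarrow> complex \<Rightarrow> complex \<Rightarrow> complex list" where
  "mk w x y z = [w, 1/(1-w), (w-1)/w, x, 1/(1-x), (x-1)/x, y, 1/(1-y), (y-1)/y, z, 1/(1-z), (z-1)/z]"

lemma mk_tendsto:
  assumes "(W \<longlongrightarrow> w) F" "(X \<longlongrightarrow> x) F" "(Y \<longlongrightarrow> y) F" "(Z \<longlongrightarrow> z) F"
    and "w \<noteq> 0" "w \<noteq> 1" "x \<noteq> 0" "x \<noteq> 1" "y \<noteq> 0" "y \<noteq> 1" "z \<noteq> 0" "z \<noteq> 1"
  shows "\<forall>i<12. ((\<lambda>e. mk (W e) (X e) (Y e) (Z e) ! i) \<longlongrightarrow> mk w x y z ! i) F"
proof (intro allI impI)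
  fix i :: nat assume "i < 12"
  then show "((\<lambda>e. mk (W e) (X e) (Y e) (Z e) ! i) \<longlongrightarrow> mk w x y z ! i) F"
    using assms by (auto dest!: less12 simp: mk_def intro!: tendsto_intros)
qed

lemma shape_iff: "shape_eqs t t' t'' \<longleftrightarrow> t \<noteq> 0 \<and> t \<noteq> 1 \<and> t' = 1/(1-t) \<and> t'' = (t-1)/t"
proof
  assume h: "shape_eqs t t' t''"
  then have a: "1 = t*(1-t'')" "1 = t'*(1-t)" by (auto simp: shape_eqs_def)
  then have "t \<noteq> 0" "t \<noteq> 1" by auto
  with a show "t \<noteq> 0 \<and> t \<noteq> 1 \<and> t' = 1/(1-t) \<and> t'' = (t-1)/t"
    by (auto simp: field_simps)
next
  assume "t \<noteq> 0 \<and> t \<noteq> 1 \<and> t' = 1/(1-t) \<and> t'' = (t-1)/t"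
  then show "shape_eqs t t' t''" by (auto simp: shape_eqs_def field_simps)
qed


lemma Dvar_iff:
  "p \<in> Dvar \<longleftrightarrow> (\<exists>w x y z. p = mk w x y z \<and> w \<noteq> 0 \<and> w \<noteq> 1 \<and> x \<noteq> 0 \<and> x \<noteq> 1 \<and>
      y \<noteq> 0 \<and> y \<noteq> 1 \<and> z \<noteq> 0 \<and> z \<noteq> 1 \<and> w*x*y*z = 1 \<and>
      (1-w)*(1-x) = w^2*x^2*(1-y)*(1-z))"
proof
  assume "p \<in> Dvar"
  then obtain w w' w'' x x' x'' y y' y'' z z' z'' where
    p: "p = [w,w',w'',x,x',x'',y,y',y'',z,z',z'']" and
    sh: "shape_eqs w w' w''" "shape_eqs x x' x''" "shape_eqs y y' y''" "shape_eqs z z' z''" and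
    e1: "1 = w * x * y * z" and
    e2: "1 = w' * x' * y' * z' * w''^2 * x''^2"
    unfolding Dvar_def by blast
  from sh have s: "w \<noteq> 0" "w \<noteq> 1" "w' = 1/(1-w)" "w'' = (w-1)/w"
     "x \<noteq> 0" "x \<noteq> 1" "x' = 1/(1-x)" "x'' = (x-1)/x"
     "y \<noteq> 0" "y \<noteq> 1" "y' = 1/(1-y)" "y'' = (y-1)/y"
     "z \<noteq> 0" "z \<noteq> 1" "z' = 1/(1-z)" "z'' = (z-1)/z" by (auto simp: shape_iff)
  have n: "1 - w \<noteq> 0" "1 - x \<noteq> 0" "1 - y \<noteq> 0" "1 - z \<noteq> 0" using s by auto
  have "(1-w)*(1-x) = w^2*x^2*(1-y)*(1-z)"
  proof -
    have "1 = (1/(1-w))*(1/(1-x))*(1/(1-y))*(1/(1-z))*((w-1)/w)^2*((x-1)/x)^2"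
      using e2 s by simp
    then have "(1-w)*(1-x)*(1-y)*(1-z)*w^2*x^2 = (w-1)^2*(x-1)^2"
      using n s by (simp add: field_simps)
    then show ?thesis using n by algebra
  qed
  then show "\<exists>w x y z. p = mk w x y z \<and> w \<noteq> 0 \<and> w \<noteq> 1 \<and> x \<noteq> 0 \<and> x \<noteq> 1 \<and>
      y \<noteq> 0 \<and> y \<noteq> 1 \<and> z \<noteq> 0 \<and> z \<noteq> 1 \<and> w*x*y*z = 1 \<and>
      (1-w)*(1-x) = w^2*x^2*(1-y)*(1-z)"
    using s e1 p by (auto simp: mk_def)
next
  assume "\<exists>w x y z. p = mk w x y z \<and> w \<noteq> 0 \<and> w \<noteq> 1 \<and> x \<noteq> 0 \<and> x \<noteq> 1 \<and>
      y \<noteq> 0 \<and> y \<noteq> 1 \<and> z \<noteq> 0 \<and> z \<noteq> 1 \<and> w*x*y*z = 1 \<and>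
      (1-w)*(1-x) = w^2*x^2*(1-y)*(1-z)"
  then obtain w x y z where p: "p = mk w x y z" and
    s: "w \<noteq> 0" "w \<noteq> 1" "x \<noteq> 0" "x \<noteq> 1" "y \<noteq> 0" "y \<noteq> 1" "z \<noteq> 0" "z \<noteq> 1"
    and e1: "w*x*y*z = 1" and e: "(1-w)*(1-x) = w^2*x^2*(1-y)*(1-z)" by blast
  have n: "1 - w \<noteq> 0" "1 - x \<noteq> 0" "1 - y \<noteq> 0" "1 - z \<noteq> 0" using s by auto
  have e3: "(1-y)*(1-z) = y^2*z^2*(1-w)*(1-x)" using e e1 by algebra
  have t: "mk w x y z \<in> torus 12"
    unfolding torus_def using s n by (auto dest!: less12 simp: mk_def)
  have E2: "1 = (1/(1-w))*(1/(1-x))*(1/(1-y))*(1/(1-z))*((w-1)/w)^2*((x-1)/x)^2"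
  proof -
    have "(1-w)*(1-x)*(1-y)*(1-z)*w^2*x^2 = (w-1)^2*(x-1)^2"
      using e by algebra
    then show ?thesis using n s by (simp add: field_simps)
  qed
  have E3: "1 = (1/(1-w))*(1/(1-x))*(1/(1-y))*(1/(1-z))*((y-1)/y)^2*((z-1)/z)^2"
  proof -
    have "(1-w)*(1-x)*(1-y)*(1-z)*y^2*z^2 = (y-1)^2*(z-1)^2"
      using e3 by algebra
    then show ?thesis using n s by (simp add: field_simps)
  qed
  show "p \<in> Dvar"
    unfolding Dvar_def p
    using t s E2 E3 e1 by (auto simp: mk_def shape_iff)
qed



definition Fc :: "complex \<Rightarrow> complex \<Rightarrow> complex \<Rightarrow> complex" where
  "Fc s u d = s*u*(s-1)*(u-1) + d*(1 - s - u + 4*s*u - s^2*u - s*u^2 + s^2*u^2)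
       + d^2*(2 - s - u + 2*s*u) + d^3"
definition Tp :: "complex \<Rightarrow> complex \<Rightarrow> complex \<Rightarrow> complex" where
  "Tp s u d = s*u - s*u^2 + s^2*u^2 + d*(2*s*u+1-u) + d^2"
definition Vp :: "complex \<Rightarrow> complex \<Rightarrow> complex \<Rightarrow> complex" where
  "Vp s u d = s*u - s^2*u + s^2*u^2 + d*(2*s*u+1-s) + d^2"
definition tE :: "complex \<Rightarrow> complex \<Rightarrow> complex \<Rightarrow> complex" where
  "tE s u d = inverse s - inverse s * u + u + d*(2*inverse s + inverse (s^2) * inverse u - inverse (s^2))
        + d^2 * inverse (s^2) * inverse u"
definition vE :: "complex \<Rightarrow> complex \<Rightarrow> complex \<Rightarrow> complex" where
  "vE s u d = inverse u - inverse u * s + s + d*(2*inverse u + inverse (u^2) * inverse s - inverse (u^2))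
        + d^2 * inverse (u^2) * inverse s"

lemma ebar_eq: "ebar (s,u,d) = [s, tE s u d, u, vE s u d]"
  by (simp add: ebar_def tE_def vE_def)

lemma Cbar_iff: "(s,u,d) \<in> Cbar \<longleftrightarrow> s \<noteq> 0 \<and> u \<noteq> 0 \<and> Fc s u d = 0"
  by (auto simp: Cbar_def Fc_def)

lemma tE_eq: "s \<noteq> 0 \<Longrightarrow> u \<noteq> 0 \<Longrightarrow> tE s u d * (s^2*u) = Tp s u d"
  by (simp add: tE_def Tp_def field_simps power2_eq_square)
lemma vE_eq: "s \<noteq> 0 \<Longrightarrow> u \<noteq> 0 \<Longrightarrow> vE s u d * (u^2*s) = Vp s u d"
  by (simp add: vE_def Vp_def field_simps power2_eq_square)

definition Q :: "complex \<Rightarrow> complex \<Rightarrow> complex \<Rightarrow> complex list" where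
  "Q Y t v = mk (v/Y) (t/Y) Y (Y/(t*v))"
definition Dmap :: "complex \<Rightarrow> complex \<Rightarrow> complex \<Rightarrow> complex list" where
  "Dmap s u d = Q (1 + d/(s*u)) (tE s u d) (vE s u d)"
definition ginv :: "complex list \<Rightarrow> complex list" where
  "ginv ys = Q ((ys!0*ys!1 - ys!2*ys!3)/(ys!0 - ys!2)) (ys!1) (ys!3)"

lemma Psi_mk: "Psi (mk w x y z) = [(1/(1-x))*((z-1)/z)/y, x*y, (1/(1-w))*((z-1)/z)/y, w*y]"
  by (simp add: Psi_def mk_def)

lemma lemB:
  assumes s: "w \<noteq> 0" "w \<noteq> 1" "x \<noteq> 0" "x \<noteq> 1" "y \<noteq> 0" "y \<noteq> 1" "z \<noteq> 0" "z \<noteq> 1"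
    and e1: "w*x*y*z = 1" and e: "(1-w)*(1-x) = w^2*x^2*(1-y)*(1-z)"
  defines "s \<equiv> (1/(1-x))*((z-1)/z)/y" and "u \<equiv> (1/(1-w))*((z-1)/z)/y"
  shows "(s,u,s*u*(y-1)) \<in> Cbar \<and> Psi (mk w x y z) = ebar (s,u,s*u*(y-1)) \<and> Dmap s u (s*u*(y-1)) = mk w x y z"
proof -
  have n: "1 - w \<noteq> 0" "1 - x \<noteq> 0" "1 - y \<noteq> 0" "1 - z \<noteq> 0" "z - 1 \<noteq> 0" using s by auto
  have s0: "s \<noteq> 0" "u \<noteq> 0" using s n unfolding s_def u_def by auto
  have hs0: "s*(1-x)*y*z = z - 1" using s n unfolding s_def by (simp add: field_simps)
  have hu0: "u*(1-w)*y*z = z - 1" using s n unfolding u_def by (simp add: field_simps)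
  have hs: "s*(1-x)*y = 1 - w*x*y" using hs0 e1 by algebra
  have hu: "u*(1-w)*y = 1 - w*x*y" using hu0 e1 by algebra
  have hR: "y*(1-w)*(1-x) = w*x*(1-y)*(w*x*y-1)" using e e1 \<open>z \<noteq> 0\<close> by algebra
  have F: "Fc s u (s*u*(y-1)) = 0"
    unfolding Fc_def using hs hu hR \<open>w \<noteq> 0\<close> \<open>x \<noteq> 0\<close> \<open>y \<noteq> 0\<close> n(1,2) by algebra
  have T: "s^2*u*(x*y) = Tp s u (s*u*(y-1))"
    unfolding Tp_def using hs hu hR \<open>w \<noteq> 0\<close> \<open>x \<noteq> 0\<close> \<open>y \<noteq> 0\<close> n(1,2) by algebra
  have V: "u^2*s*(w*y) = Vp s u (s*u*(y-1))"
    unfolding Vp_def using hs hu hR \<open>w \<noteq> 0\<close> \<open>x \<noteq> 0\<close> \<open>y \<noteq> 0\<close> n(1,2) by algebra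
  have tE: "tE s u (s*u*(y-1)) = x*y"
  proof -
    have "tE s u (s*u*(y-1)) * (s^2*u) = (x*y) * (s^2*u)"
      using tE_eq[OF s0, of "s*u*(y-1)"] T by (simp add: mult_ac)
    then show ?thesis using s0 by simp
  qed
  have vE: "vE s u (s*u*(y-1)) = w*y"
  proof -
    have "vE s u (s*u*(y-1)) * (u^2*s) = (w*y) * (u^2*s)"
      using vE_eq[OF s0, of "s*u*(y-1)"] V by (simp add: mult_ac)
    then show ?thesis using s0 by simp
  qed
  have Y: "1 + s*u*(y-1)/(s*u) = y" using s0 by (simp add: field_simps)
  have "z*((x*y)*(w*y)) = y" using e1 by algebra
  then have zz: "y/((x*y)*(w*y)) = z" using s by (simp add: field_simps)
  have "Dmap s u (s*u*(y-1)) = mk w x y z"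
    unfolding Dmap_def Q_def Y tE vE zz using s by simp
  moreover have "Psi (mk w x y z) = ebar (s,u,s*u*(y-1))"
  proof -
    have "Psi (mk w x y z) = [s, x*y, u, w*y]" unfolding Psi_mk s_def u_def by simp
    then show ?thesis unfolding ebar_eq tE vE by simp
  qed
  moreover have "(s,u,s*u*(y-1)) \<in> Cbar" using F s0 by (simp add: Cbar_iff)
  ultimately show ?thesis by blast
qed



lemma N1: "Fc s u d = 0 \<Longrightarrow> s*u*(s*u+d)*(s*(s*u+d) - Tp s u d) = s^2*u^2*(s*u+d) - Tp s u d * Vp s u d"
  unfolding Fc_def Tp_def Vp_def by algebra
lemma N2: "Fc s u d = 0 \<Longrightarrow> s*u*(s*u+d)*(u*(s*u+d) - Vp s u d) = s^2*u^2*(s*u+d) - Tp s u d * Vp s u d"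
  unfolding Fc_def Tp_def Vp_def by algebra
lemma N3: "Fc s u d = 0 \<Longrightarrow> s^2*u^2*(s*u+d) - Tp s u d * Vp s u d = Tp s u d * Vp s u d * d"
  unfolding Fc_def Tp_def Vp_def by algebra

lemma lemA:
  assumes C: "(s,u,d) \<in> Cbar" and s1: "s \<noteq> 1" and u1: "u \<noteq> 1"
  shows "Dmap s u d \<in> Dvar \<and> Psi (Dmap s u d) = ebar (s,u,d)"
proof -
  from C have s0: "s \<noteq> 0" "u \<noteq> 0" and hF: "Fc s u d = 0" by (auto simp: Cbar_iff)
  have d0: "d \<noteq> 0"
  proof
    assume "d = 0"
    then have "Fc s u d = s*u*(s-1)*(u-1)" by (simp add: Fc_def)
    with hF s0 s1 u1 show False by simp
  qed
  have Yn0: "s*u + d \<noteq> 0"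
  proof
    assume h: "s*u + d = 0"
    then have "Fc s u d = -(s^2*u^2)" unfolding Fc_def by algebra
    with hF s0 show False by simp
  qed
  define Y where "Y = 1 + d/(s*u)"
  define t where "t = tE s u d"
  define v where "v = vE s u d"
  have hY: "Y*(s*u) = s*u + d" unfolding Y_def using s0 by (simp add: field_simps)
  have ht: "t*(s^2*u) = Tp s u d" unfolding t_def using tE_eq[OF s0] .
  have hv: "v*(u^2*s) = Vp s u d" unfolding v_def using vE_eq[OF s0] .
  have ss: "s^3*u^3 \<noteq> 0" using s0 by simp
  have "s*u*(Y*(s*u))*(s*(Y*(s*u)) - t*(s^2*u)) = s^2*u^2*(Y*(s*u)) - t*(s^2*u) * (v*(u^2*s))"
    unfolding hY ht hv by (rule N1[OF hF])
  then have "(s^3*u^3) * (s*Y*(Y-t) - (Y - t*v)) = 0" by algebra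
  then have E1: "s*Y*(Y-t) = Y - t*v" using ss by simp
  have "s*u*(Y*(s*u))*(u*(Y*(s*u)) - v*(u^2*s)) = s^2*u^2*(Y*(s*u)) - t*(s^2*u) * (v*(u^2*s))"
    unfolding hY ht hv by (rule N2[OF hF])
  then have "(s^3*u^3) * (u*Y*(Y-v) - (Y - t*v)) = 0" by algebra
  then have E2: "u*Y*(Y-v) = Y - t*v" using ss by simp
  have "s^2*u^2*(Y*(s*u)) - t*(s^2*u) * (v*(u^2*s)) = t*(s^2*u) * (v*(u^2*s)) * d"
    unfolding hY ht hv by (rule N3[OF hF])
  then have "(s^3*u^3) * (Y - t*v - t*v*d) = 0" by algebra
  then have E3: "Y - t*v = t*v*d" using ss by simp
  have hd: "d = s*u*(Y-1)" using hY by algebra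
  have Y0: "Y \<noteq> 0" using hY Yn0 by auto
  have Y1: "Y \<noteq> 1" using hY d0 by auto
  have t0: "t \<noteq> 0" using E3 Y0 by auto
  have v0: "v \<noteq> 0" using E3 Y0 by auto
  have tvd: "t*v*d \<noteq> 0" using t0 v0 d0 by simp
  have X1: "t \<noteq> Y" using E1 E3 tvd by auto
  have W1: "v \<noteq> Y" using E2 E3 tvd by auto
  have Z1: "Y \<noteq> t*v" using E3 tvd by auto
  define W where "W = v/Y"
  define X where "X = t/Y"
  define Z where "Z = Y/(t*v)"
  have DM: "Dmap s u d = mk W X Y Z"
    unfolding Dmap_def Q_def W_def X_def Z_def Y_def t_def v_def ..
  have hW: "W*Y = v" and hX: "X*Y = t" and hZ: "Z*(t*v) = Y"
    unfolding W_def X_def Z_def using Y0 t0 v0 by simp_all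
  have nz: "W \<noteq> 0" "W \<noteq> 1" "X \<noteq> 0" "X \<noteq> 1" "Z \<noteq> 0" "Z \<noteq> 1"
    unfolding W_def X_def Z_def using Y0 t0 v0 X1 W1 Z1 by (auto simp: field_simps)
  have e1: "W*X*Y*Z = 1" unfolding W_def X_def Z_def using Y0 t0 v0 by (simp add: field_simps)
  have P1: "Y^2*(Y-v)*(Y-t) = t*v*(1-Y)*(t*v-Y)"
  proof -
    have "s*u*(Y^2*(Y-v)*(Y-t) - t*v*(1-Y)*(t*v-Y)) = 0"
      using E1 E2 E3 hd by algebra
    then show ?thesis using s0 by simp
  qed
  have e: "(1-W)*(1-X) = W^2*X^2*(1-Y)*(1-Z)"
  proof -
    have "Y^2*(Y-W*Y)*(Y-X*Y) = X*Y*(W*Y)*(1-Y)*(X*Y*(W*Y)-Y)"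
      using P1 unfolding hW[symmetric] hX[symmetric] .
    then have P1': "Y^4*(1-W)*(1-X) = W*X*Y^3*(1-Y)*(W*X*Y-1)" by algebra
    have "Y^4*((1-W)*(1-X) - W^2*X^2*(1-Y)*(1-Z)) = 0" using P1' e1 by algebra
    then show ?thesis using Y0 by simp
  qed
  have inD: "mk W X Y Z \<in> Dvar"
    unfolding Dvar_iff using nz e1 e Y0 Y1 by blast
  have ps: "(1/(1-X))*((Z-1)/Z)/Y = s"
  proof -
    have a: "1 - X = (Y-t)/Y" unfolding X_def using Y0 by (simp add: field_simps)
    have b: "(Z-1)/Z = (Y - t*v)/Y" unfolding Z_def using Y0 t0 v0 by (simp add: field_simps)
    have c: "Y - t \<noteq> 0" using X1 by simp
    show ?thesis unfolding a b E1[symmetric] using Y0 c by (simp add: field_simps)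
  qed
  have pu: "(1/(1-W))*((Z-1)/Z)/Y = u"
  proof -
    have a: "1 - W = (Y-v)/Y" unfolding W_def using Y0 by (simp add: field_simps)
    have b: "(Z-1)/Z = (Y - t*v)/Y" unfolding Z_def using Y0 t0 v0 by (simp add: field_simps)
    have c: "Y - v \<noteq> 0" using W1 by simp
    show ?thesis unfolding a b E2[symmetric] using Y0 c by (simp add: field_simps)
  qed
  have "Psi (mk W X Y Z) = ebar (s,u,d)"
    unfolding Psi_mk ebar_eq ps pu hW hX t_def[symmetric] v_def[symmetric] ..
  with inD DM show ?thesis by simp
qed



lemma Fc_cubic: "Fc s u r = r^3 + (2 - s - u + 2*s*u)*r^2 + (1 - s - u + 4*s*u - s^2*u - s*u^2 + s^2*u^2)*r + s*u*(s-1)*(u-1)"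
  unfolding Fc_def by algebra

lemma root_bound:
  fixes n N :: real
  assumes "0 \<le> n" "n^3 \<le> N"
  shows "n \<le> root 3 N"
proof -
  have "root 3 (n^3) \<le> root 3 N" by (rule real_root_le_mono) (use assms in auto)
  then show ?thesis using real_root_power_cancel[of 3 n] assms(1) by simp
qed

lemma approx:
  assumes C: "(s0,u0,d0) \<in> Cbar"
  shows "\<exists>S Uf Df. (S \<longlongrightarrow> s0) (at 0) \<and> (Uf \<longlongrightarrow> u0) (at 0) \<and> (Df \<longlongrightarrow> d0) (at 0) \<and>
    eventually (\<lambda>e. (S e, Uf e, Df e) \<in> Cbar \<and> S e \<noteq> Uf e \<and> S e \<noteq> 1 \<and> Uf e \<noteq> 1) (at (0::complex))"
proof -
  from C have s0: "s0 \<noteq> 0" "u0 \<noteq> 0" and hF: "Fc s0 u0 d0 = 0" by (auto simp: Cbar_iff)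
  define S where "S = (\<lambda>e::complex. s0 + e)"
  define Uf where "Uf = (\<lambda>e::complex. u0 + 2*e)"
  have ex: "\<forall>e. \<exists>r. Fc (S e) (Uf e) r = 0 \<and> norm (d0 - r)^3 \<le> norm (Fc (S e) (Uf e) d0)"
    unfolding Fc_cubic by (intro allI cubic_root_near)
  define Df where "Df = (\<lambda>e. SOME r. Fc (S e) (Uf e) r = 0 \<and> norm (d0 - r)^3 \<le> norm (Fc (S e) (Uf e) d0))"
  have Df: "\<And>e. Fc (S e) (Uf e) (Df e) = 0 \<and> norm (d0 - Df e)^3 \<le> norm (Fc (S e) (Uf e) d0)"
    unfolding Df_def using ex by (metis (mono_tags, lifting) someI_ex)
  have lS: "(S \<longlongrightarrow> s0) (at 0)" unfolding S_def by (auto intro!: tendsto_eq_intros)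
  have lU: "(Uf \<longlongrightarrow> u0) (at 0)" unfolding Uf_def by (auto intro!: tendsto_eq_intros)
  have lF: "((\<lambda>e. Fc (S e) (Uf e) d0) \<longlongrightarrow> Fc s0 u0 d0) (at 0)"
    unfolding Fc_def using lS lU by (auto intro!: tendsto_intros)
  have lR: "((\<lambda>e. root 3 (norm (Fc (S e) (Uf e) d0))) \<longlongrightarrow> 0) (at 0)"
  proof -
    have "((\<lambda>e. root 3 (norm (Fc (S e) (Uf e) d0))) \<longlongrightarrow> root 3 (norm (Fc s0 u0 d0))) (at 0)"
      by (intro tendsto_intros lF)
    then show ?thesis using hF by simp
  qed
  have "((\<lambda>e. Df e - d0) \<longlongrightarrow> 0) (at 0)"
  proof (rule tendsto_0_le[OF lR, of _ 1])
    show "\<forall>\<^sub>F e in at 0. norm (Df e - d0) \<le> norm (root 3 (norm (Fc (S e) (Uf e) d0))) * 1"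
    proof (intro always_eventually allI)
      fix e
      have "norm (Df e - d0) \<le> root 3 (norm (Fc (S e) (Uf e) d0))"
        using root_bound[of "norm (Df e - d0)"] Df[of e] by (simp add: norm_minus_commute)
      then show "norm (Df e - d0) \<le> norm (root 3 (norm (Fc (S e) (Uf e) d0))) * 1" by simp
    qed
  qed
  then have lD: "(Df \<longlongrightarrow> d0) (at 0)" by (simp add: LIM_zero_iff)
  have ev: "\<And>c. eventually (\<lambda>e::complex. e \<noteq> c) (at 0)"
    by (rule eventually_neq_at_within)
  have "eventually (\<lambda>e. e \<noteq> -s0 \<and> e \<noteq> -u0/2 \<and> e \<noteq> s0 - u0 \<and> e \<noteq> 1 - s0 \<and> e \<noteq> (1 - u0)/2) (at (0::complex))"
    by (intro eventually_conj ev)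
  then have "eventually (\<lambda>e. (S e, Uf e, Df e) \<in> Cbar \<and> S e \<noteq> Uf e \<and> S e \<noteq> 1 \<and> Uf e \<noteq> 1) (at (0::complex))"
  proof (rule eventually_mono)
    fix e :: complex
    assume h: "e \<noteq> -s0 \<and> e \<noteq> -u0/2 \<and> e \<noteq> s0 - u0 \<and> e \<noteq> 1 - s0 \<and> e \<noteq> (1 - u0)/2"
    have "S e \<noteq> 0" using h unfolding S_def by (auto simp: add_eq_0_iff)
    moreover have "Uf e \<noteq> 0"
    proof
      assume "Uf e = 0"
      then have "e = -u0/2" unfolding Uf_def by algebra
      with h show False by simp
    qed
    moreover have "S e \<noteq> Uf e" using h unfolding S_def Uf_def by (auto simp: field_simps)
    moreover have "S e \<noteq> 1" using h unfolding S_def by (auto simp: field_simps)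
    moreover have "Uf e \<noteq> 1" using h unfolding Uf_def by (auto simp: field_simps)
    ultimately show "(S e, Uf e, Df e) \<in> Cbar \<and> S e \<noteq> Uf e \<and> S e \<noteq> 1 \<and> Uf e \<noteq> 1"
      using Df[of e] by (simp add: Cbar_iff)
  qed
  with lS lU lD show ?thesis by blast
qed



definition Dnf :: "complex \<Rightarrow> complex \<Rightarrow> complex \<Rightarrow> complex \<Rightarrow> complex" where
  "Dnf s t u v = s*u*(s*t - u*v - s + u)"
definition G1f :: "complex \<Rightarrow> complex \<Rightarrow> complex \<Rightarrow> complex \<Rightarrow> complex" where
  "G1f s t u v = (s-u)^2*(s^2*u*t) - ((s-u)^2*(s*u - s*u^2 + s^2*u^2)
      + Dnf s t u v*(s-u)*(2*s*u+1-u) + (Dnf s t u v)^2)"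
definition G2f :: "complex \<Rightarrow> complex \<Rightarrow> complex \<Rightarrow> complex \<Rightarrow> complex" where
  "G2f s t u v = (s-u)^2*(u^2*s*v) - ((s-u)^2*(s*u - s^2*u + s^2*u^2)
      + Dnf s t u v*(s-u)*(2*s*u+1-s) + (Dnf s t u v)^2)"
definition G3f :: "complex \<Rightarrow> complex \<Rightarrow> complex \<Rightarrow> complex \<Rightarrow> complex" where
  "G3f s t u v = (s-u)^3*(s*u*(s-1)*(u-1))
      + Dnf s t u v*(s-u)^2*(1 - s - u + 4*s*u - s^2*u - s*u^2 + s^2*u^2)
      + (Dnf s t u v)^2*(s-u)*(2 - s - u + 2*s*u) + (Dnf s t u v)^3"

lemma Gid:
  assumes "d*(s-u) = Dnf s t u v"
  shows "G1f s t u v = (s-u)^2*(s^2*u*t - Tp s u d)"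
    "G2f s t u v = (s-u)^2*(u^2*s*v - Vp s u d)"
    "G3f s t u v = (s-u)^3*Fc s u d"
proof -
  show "G1f s t u v = (s-u)^2*(s^2*u*t - Tp s u d)"
    unfolding G1f_def Tp_def assms[symmetric] by algebra
  show "G2f s t u v = (s-u)^2*(u^2*s*v - Vp s u d)"
    unfolding G2f_def Vp_def assms[symmetric] by algebra
  show "G3f s t u v = (s-u)^3*Fc s u d"
    unfolding G3f_def Fc_def assms[symmetric] by algebra
qed

lemma Dn_ebar:
  assumes "s \<noteq> 0" "u \<noteq> 0"
  shows "d*(s-u) = Dnf s (tE s u d) u (vE s u d)"
proof -
  have a: "tE s u d * (s^2*u) = Tp s u d" "vE s u d * (u^2*s) = Vp s u d"
    using tE_eq[OF assms] vE_eq[OF assms] by auto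
  show ?thesis using a unfolding Dnf_def Tp_def Vp_def by algebra
qed

lemma G_vanish:
  assumes "(s,u,d) \<in> Cbar"
  shows "G1f s (tE s u d) u (vE s u d) = 0" "G2f s (tE s u d) u (vE s u d) = 0"
    "G3f s (tE s u d) u (vE s u d) = 0"
proof -
  from assms have s0: "s \<noteq> 0" "u \<noteq> 0" and hF: "Fc s u d = 0" by (auto simp: Cbar_iff)
  note g = Gid[OF Dn_ebar[OF s0]]
  have a: "tE s u d * (s^2*u) = Tp s u d" "vE s u d * (u^2*s) = Vp s u d"
    using tE_eq[OF s0] vE_eq[OF s0] by auto
  show "G1f s (tE s u d) u (vE s u d) = 0" unfolding g using a by (simp add: mult_ac)
  show "G2f s (tE s u d) u (vE s u d) = 0" unfolding g using a by (simp add: mult_ac)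
  show "G3f s (tE s u d) u (vE s u d) = 0" unfolding g using hF by simp
qed

lemma list4: "length ys = 4 \<Longrightarrow> ys = [ys!0, ys!1, ys!2, ys!3]"
  by (rule nth_equalityI) (auto dest!: less4)

lemma G_conv:
  assumes "s \<noteq> 0" "u \<noteq> 0" "s \<noteq> u" "G1f s t u v = 0" "G2f s t u v = 0" "G3f s t u v = 0"
  defines "d \<equiv> Dnf s t u v / (s-u)"
  shows "(s,u,d) \<in> Cbar \<and> tE s u d = t \<and> vE s u d = v"
proof -
  have su: "s - u \<noteq> 0" using assms by simp
  have hd: "d*(s-u) = Dnf s t u v" unfolding d_def using su by simp
  note g = Gid[OF hd]
  have "Fc s u d = 0" using assms(6) su unfolding g by simp
  moreover have "tE s u d = t"
  proof -
    have "s^2*u*t = Tp s u d" using assms(4) su unfolding g by simp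
    then have "tE s u d * (s^2*u) = t * (s^2*u)" using tE_eq[OF assms(1,2)] by (simp add: mult_ac)
    then show ?thesis using assms(1,2) by simp
  qed
  moreover have "vE s u d = v"
  proof -
    have "u^2*s*v = Vp s u d" using assms(5) su unfolding g by simp
    then have "vE s u d * (u^2*s) = v * (u^2*s)" using vE_eq[OF assms(1,2)] by (simp add: mult_ac)
    then show ?thesis using assms(1,2) by simp
  qed
  ultimately show ?thesis using assms(1,2) by (simp add: Cbar_iff)
qed

lemma ginv_ebar:
  assumes "s \<noteq> 0" "u \<noteq> 0" "s \<noteq> u"
  shows "ginv (ebar (s,u,d)) = Dmap s u d"
proof -
  have a: "tE s u d * (s^2*u) = Tp s u d" "vE s u d * (u^2*s) = Vp s u d"
    using tE_eq[OF assms(1,2)] vE_eq[OF assms(1,2)] by auto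
  have "s*u*(s*tE s u d - u*vE s u d) = (s-u)*(s*u+d)"
    using a unfolding Tp_def Vp_def by algebra
  then have "(s*tE s u d - u*vE s u d)/(s-u) = 1 + d/(s*u)"
    using assms by (simp add: field_simps)
  then show ?thesis unfolding ginv_def Dmap_def ebar_eq by simp
qed

lemma ebar_tendsto:
  assumes "(S \<longlongrightarrow> s0) F" "(Uf \<longlongrightarrow> u0) F" "(Df \<longlongrightarrow> d0) F" "s0 \<noteq> 0" "u0 \<noteq> 0"
  shows "\<forall>i<4. ((\<lambda>e. ebar (S e, Uf e, Df e) ! i) \<longlongrightarrow> ebar (s0,u0,d0) ! i) F"
proof (intro allI impI)
  fix i :: nat assume "i < 4"
  then show "((\<lambda>e. ebar (S e, Uf e, Df e) ! i) \<longlongrightarrow> ebar (s0,u0,d0) ! i) F"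
    using assms by (auto dest!: less4 simp: ebar_eq tE_def vE_def intro!: tendsto_intros)
qed

lemma Dmap_tendsto:
  assumes lim: "(S \<longlongrightarrow> s0) F" "(Uf \<longlongrightarrow> u0) F" "(Df \<longlongrightarrow> d0) F" and s0: "s0 \<noteq> 0" "u0 \<noteq> 0"
    and Y0: "1 + d0/(s0*u0) \<noteq> 0" and t0: "tE s0 u0 d0 \<noteq> 0" and v0: "vE s0 u0 d0 \<noteq> 0"
    and DM: "Dmap s0 u0 d0 = mk w x y z"
    and nz: "w \<noteq> 0" "w \<noteq> 1" "x \<noteq> 0" "x \<noteq> 1" "y \<noteq> 0" "y \<noteq> 1" "z \<noteq> 0" "z \<noteq> 1"
  shows "\<forall>i<12. ((\<lambda>e. Dmap (S e) (Uf e) (Df e) ! i) \<longlongrightarrow> Dmap s0 u0 d0 ! i) F"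
proof -
  let ?Y = "\<lambda>e. 1 + Df e/(S e * Uf e)" and ?t = "\<lambda>e. tE (S e) (Uf e) (Df e)"
    and ?v = "\<lambda>e. vE (S e) (Uf e) (Df e)"
  let ?YY = "1 + d0/(s0*u0)" and ?tt = "tE s0 u0 d0" and ?vv = "vE s0 u0 d0"
  have lY: "(?Y \<longlongrightarrow> ?YY) F" using lim s0 by (auto intro!: tendsto_intros)
  have lt: "(?t \<longlongrightarrow> ?tt) F" using lim s0 unfolding tE_def by (auto intro!: tendsto_intros)
  have lv: "(?v \<longlongrightarrow> ?vv) F" using lim s0 unfolding vE_def by (auto intro!: tendsto_intros)
  have comp: "?vv/?YY = w" "?tt/?YY = x" "?YY = y" "?YY/(?tt*?vv) = z"
    using arg_cong[OF DM, of "\<lambda>l. l!0"] arg_cong[OF DM, of "\<lambda>l. l!3"]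
      arg_cong[OF DM, of "\<lambda>l. l!6"] arg_cong[OF DM, of "\<lambda>l. l!9"]
    unfolding Dmap_def Q_def mk_def by simp_all
  have "\<forall>i<12. ((\<lambda>e. mk (?v e/?Y e) (?t e/?Y e) (?Y e) (?Y e/(?t e*?v e)) ! i) \<longlongrightarrow>
      mk (?vv/?YY) (?tt/?YY) ?YY (?YY/(?tt*?vv)) ! i) F"
    by (rule mk_tendsto) (use lY lt lv Y0 t0 v0 nz comp in \<open>auto intro!: tendsto_intros\<close>)
  then show ?thesis unfolding Dmap_def Q_def .
qed



definition goodL :: "complex list \<Rightarrow> bool" where
  "goodL ys \<longleftrightarrow> ys!0 \<noteq> ys!2 \<and> ys!0 \<noteq> 1 \<and> ys!2 \<noteq> 1"
definition U0 :: "complex list set" where "U0 = {p \<in> Dvar. goodL (Psi p)}"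
definition V0 :: "complex list set" where "V0 = {y \<in> E0bar. goodL y}"
definition hE :: "complex list \<Rightarrow> complex" where "hE ys = (ys!0 - ys!2)*(ys!0 - 1)*(ys!2 - 1)"
definition hD :: "complex list \<Rightarrow> complex" where
  "hD p = (p!4*p!11 - p!1*p!11)*(p!4*p!11 - p!6)*(p!1*p!11 - p!6)"

lemma pf_hD: "poly_fun 12 hD"
  unfolding hD_def by (intro pf_intros) simp_all
lemma pf_hE: "poly_fun 4 hE"
  unfolding hE_def by (intro pf_intros) simp_all
lemma pf_G1: "poly_fun 4 (\<lambda>ys. G1f (ys!0) (ys!1) (ys!2) (ys!3))"
  unfolding G1f_def Dnf_def by (intro pf_intros) simp_all
lemma pf_G2: "poly_fun 4 (\<lambda>ys. G2f (ys!0) (ys!1) (ys!2) (ys!3))"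
  unfolding G2f_def Dnf_def by (intro pf_intros) simp_all
lemma pf_G3: "poly_fun 4 (\<lambda>ys. G3f (ys!0) (ys!1) (ys!2) (ys!3))"
  unfolding G3f_def Dnf_def by (intro pf_intros) simp_all

lemma Dvar_torus: "Dvar \<subseteq> torus 12"
  unfolding Dvar_def by auto
lemma E0_torus: "E0bar \<subseteq> torus 4"
  unfolding E0bar_def zclosure_def by auto

lemma Psi_torus:
  assumes "p \<in> Dvar" shows "Psi p \<in> torus 4"
proof -
  obtain w x y z where p: "p = mk w x y z" and
    s: "w \<noteq> 0" "w \<noteq> 1" "x \<noteq> 0" "x \<noteq> 1" "y \<noteq> 0" "y \<noteq> 1" "z \<noteq> 0" "z \<noteq> 1"
    using assms unfolding Dvar_iff by blast
  show ?thesis unfolding p Psi_mk torus_def using s by (auto dest!: less4)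
qed

lemma PsiD: assumes "p \<in> Dvar" shows "Psi p \<in> E0bar"
proof -
  obtain w x y z where p: "p = mk w x y z" and
    s: "w \<noteq> 0" "w \<noteq> 1" "x \<noteq> 0" "x \<noteq> 1" "y \<noteq> 0" "y \<noteq> 1" "z \<noteq> 0" "z \<noteq> 1"
    and e1: "w*x*y*z = 1" and e: "(1-w)*(1-x) = w^2*x^2*(1-y)*(1-z)"
    using assms unfolding Dvar_iff by blast
  note B = lemB[OF s e1 e]
  let ?q = "((1/(1-x))*((z-1)/z)/y, (1/(1-w))*((z-1)/z)/y, (1/(1-x))*((z-1)/z)/y * ((1/(1-w))*((z-1)/z)/y) * (y-1))"
  have q: "?q \<in> Cbar" "Psi p = ebar ?q" using B p by auto
  have len: "length (Psi p) = 4" using Psi_torus[OF assms] by (simp add: torus_def)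
  have "Psi p \<in> zero_set 4 (vanishing_polys 4 (ebar ` Cbar))"
    unfolding zero_set_def vanishing_polys_def using len q by auto
  then show ?thesis unfolding E0bar_def zclosure_def using Psi_torus[OF assms] by auto
qed

lemma good_hD: assumes "p \<in> torus 12" shows "goodL (Psi p) \<longleftrightarrow> hD p \<noteq> 0"
proof -
  have p6: "p!6 \<noteq> 0" using assms unfolding torus_def by auto
  define a where "a = p!4*p!11"
  define b where "b = p!1*p!11"
  define c where "c = p!6"
  have c0: "c \<noteq> 0" using p6 c_def by simp
  have "goodL (Psi p) \<longleftrightarrow> a/c \<noteq> b/c \<and> a/c \<noteq> 1 \<and> b/c \<noteq> 1"
    unfolding goodL_def Psi_def a_def b_def c_def by simp
  also have "\<dots> \<longleftrightarrow> a \<noteq> b \<and> a \<noteq> c \<and> b \<noteq> c" using c0 by (auto simp: divide_eq_1_iff)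
  also have "\<dots> \<longleftrightarrow> hD p \<noteq> 0" unfolding hD_def a_def[symmetric] b_def[symmetric] c_def[symmetric] by simp
  finally show ?thesis .
qed

lemma U0_eq: "U0 = Dvar - (torus 12 \<inter> zero_set 12 {hD})"
  using Dvar_torus good_hD unfolding U0_def zero_set_def torus_def by auto

lemma V0_eq: "V0 = E0bar - (torus 4 \<inter> zero_set 4 {hE})"
  using E0_torus unfolding V0_def zero_set_def torus_def goodL_def hE_def by auto

lemma zclosed_hD: "zclosed 12 (torus 12 \<inter> zero_set 12 {hD})"
  unfolding zclosed_def using pf_hD by blast
lemma zclosed_hE: "zclosed 4 (torus 4 \<inter> zero_set 4 {hE})"
  unfolding zclosed_def using pf_hE by blast

lemma D_dense: "Dvar \<subseteq> zclosure 12 U0"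
proof
  fix p0 assume p0: "p0 \<in> Dvar"
  obtain w x y z where p: "p0 = mk w x y z" and
    s: "w \<noteq> 0" "w \<noteq> 1" "x \<noteq> 0" "x \<noteq> 1" "y \<noteq> 0" "y \<noteq> 1" "z \<noteq> 0" "z \<noteq> 1"
    and e1: "w*x*y*z = 1" and e: "(1-w)*(1-x) = w^2*x^2*(1-y)*(1-z)"
    using p0 unfolding Dvar_iff by blast
  define s0 where "s0 = (1/(1-x))*((z-1)/z)/y"
  define u0 where "u0 = (1/(1-w))*((z-1)/z)/y"
  define d0 where "d0 = s0*u0*(y-1)"
  have C0: "(s0,u0,d0) \<in> Cbar" and DM: "Dmap s0 u0 d0 = mk w x y z"
    using lemB[OF s e1 e] unfolding s0_def u0_def d0_def by auto
  have ns: "s0 \<noteq> 0" "u0 \<noteq> 0" using C0 by (auto simp: Cbar_iff)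
  have c0: "vE s0 u0 d0 / (1 + d0/(s0*u0)) = w" "tE s0 u0 d0 / (1 + d0/(s0*u0)) = x" "1 + d0/(s0*u0) = y"
    using arg_cong[OF DM, of "\<lambda>l. l!0"] arg_cong[OF DM, of "\<lambda>l. l!3"] arg_cong[OF DM, of "\<lambda>l. l!6"]
    unfolding Dmap_def Q_def mk_def by simp_all
  have Y0: "1 + d0/(s0*u0) \<noteq> 0" using c0 s by simp
  have t0: "tE s0 u0 d0 \<noteq> 0" using c0 s by auto
  have v0: "vE s0 u0 d0 \<noteq> 0" using c0 s by auto
  obtain S Uf Df where lS: "(S \<longlongrightarrow> s0) (at 0)" and lU: "(Uf \<longlongrightarrow> u0) (at 0)" and lD: "(Df \<longlongrightarrow> d0) (at 0)"
    and ev: "eventually (\<lambda>e. (S e, Uf e, Df e) \<in> Cbar \<and> S e \<noteq> Uf e \<and> S e \<noteq> 1 \<and> Uf e \<noteq> 1) (at (0::complex))"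
    using approx[OF C0] by blast
  have lim: "\<forall>i<12. ((\<lambda>e. Dmap (S e) (Uf e) (Df e) ! i) \<longlongrightarrow> Dmap s0 u0 d0 ! i) (at 0)"
    by (rule Dmap_tendsto[OF lS lU lD ns Y0 t0 v0 DM s])
  have "P p0 = 0" if P: "poly_fun 12 P" "\<forall>q\<in>U0. P q = 0" for P
  proof -
    have L: "((\<lambda>e. P (Dmap (S e) (Uf e) (Df e))) \<longlongrightarrow> P (Dmap s0 u0 d0)) (at 0)"
      by (rule poly_fun_tendsto[OF P(1) lim])
    have "eventually (\<lambda>e. P (Dmap (S e) (Uf e) (Df e)) = 0) (at (0::complex))"
      using ev
    proof (rule eventually_mono)
      fix e assume h: "(S e, Uf e, Df e) \<in> Cbar \<and> S e \<noteq> Uf e \<and> S e \<noteq> 1 \<and> Uf e \<noteq> 1"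
      then have A: "Dmap (S e) (Uf e) (Df e) \<in> Dvar \<and> Psi (Dmap (S e) (Uf e) (Df e)) = ebar (S e, Uf e, Df e)"
        by (intro lemA) auto
      then have "Dmap (S e) (Uf e) (Df e) \<in> U0" using h unfolding U0_def goodL_def by (simp add: ebar_eq)
      then show "P (Dmap (S e) (Uf e) (Df e)) = 0" using P(2) by blast
    qed
    then have "P (Dmap s0 u0 d0) = 0" by (rule lim_zero_eventually[OF L])
    then show ?thesis using DM p by simp
  qed
  moreover have "p0 \<in> torus 12" using p0 Dvar_torus by auto
  ultimately show "p0 \<in> zclosure 12 U0"
    unfolding zclosure_def zero_set_def vanishing_polys_def torus_def by auto
qed

lemma E_dense: "E0bar \<subseteq> zclosure 4 V0"
proof
  fix y0 assume y0: "y0 \<in> E0bar"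
  have "P y0 = 0" if P: "poly_fun 4 P" "\<forall>q\<in>V0. P q = 0" for P
  proof -
    have "P q = 0" if q: "q \<in> ebar ` Cbar" for q
    proof -
      obtain s0 u0 d0 where C0: "(s0,u0,d0) \<in> Cbar" and qq: "q = ebar (s0,u0,d0)" using q by auto
      have ns: "s0 \<noteq> 0" "u0 \<noteq> 0" using C0 by (auto simp: Cbar_iff)
      obtain S Uf Df where lS: "(S \<longlongrightarrow> s0) (at 0)" and lU: "(Uf \<longlongrightarrow> u0) (at 0)" and lD: "(Df \<longlongrightarrow> d0) (at 0)"
        and ev: "eventually (\<lambda>e. (S e, Uf e, Df e) \<in> Cbar \<and> S e \<noteq> Uf e \<and> S e \<noteq> 1 \<and> Uf e \<noteq> 1) (at (0::complex))"
        using approx[OF C0] by blast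
      have L: "((\<lambda>e. P (ebar (S e, Uf e, Df e))) \<longlongrightarrow> P (ebar (s0,u0,d0))) (at 0)"
        by (rule poly_fun_tendsto[OF P(1) ebar_tendsto[OF lS lU lD ns]])
      have "eventually (\<lambda>e. P (ebar (S e, Uf e, Df e)) = 0) (at (0::complex))"
        using ev
      proof (rule eventually_mono)
        fix e assume h: "(S e, Uf e, Df e) \<in> Cbar \<and> S e \<noteq> Uf e \<and> S e \<noteq> 1 \<and> Uf e \<noteq> 1"
        then have A: "Dmap (S e) (Uf e) (Df e) \<in> Dvar \<and> Psi (Dmap (S e) (Uf e) (Df e)) = ebar (S e, Uf e, Df e)"
          by (intro lemA) auto
        then have "ebar (S e, Uf e, Df e) \<in> E0bar" using PsiD by metis
        then have "ebar (S e, Uf e, Df e) \<in> V0" using h unfolding V0_def goodL_def by (simp add: ebar_eq)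
        then show "P (ebar (S e, Uf e, Df e)) = 0" using P(2) by blast
      qed
      then show ?thesis unfolding qq by (rule lim_zero_eventually[OF L])
    qed
    then have "P \<in> vanishing_polys 4 (ebar ` Cbar)" unfolding vanishing_polys_def using P(1) by blast
    then show ?thesis using y0 unfolding E0bar_def zclosure_def zero_set_def by blast
  qed
  moreover have "y0 \<in> torus 4" using y0 E0_torus by auto
  ultimately show "y0 \<in> zclosure 4 V0"
    unfolding zclosure_def zero_set_def vanishing_polys_def torus_def by auto
qed

lemma V0_pre:
  assumes y: "y \<in> V0"
  shows "ginv y \<in> U0 \<and> Psi (ginv y) = y"
proof -
  have yE: "y \<in> E0bar" and g: "goodL y" using y unfolding V0_def by auto
  have yt: "y \<in> torus 4" using yE E0_torus by auto
  then have len: "length y = 4" and nz: "y!0 \<noteq> 0" "y!2 \<noteq> 0" unfolding torus_def by auto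
  have van: "\<And>G. poly_fun 4 G \<Longrightarrow> (\<And>s u d. (s,u,d) \<in> Cbar \<Longrightarrow> G (ebar (s,u,d)) = 0) \<Longrightarrow> G y = 0"
  proof -
    fix G assume G: "poly_fun 4 G" "\<And>s u d. (s,u,d) \<in> Cbar \<Longrightarrow> G (ebar (s,u,d)) = 0"
    then have "G \<in> vanishing_polys 4 (ebar ` Cbar)" unfolding vanishing_polys_def by auto
    then show "G y = 0" using yE unfolding E0bar_def zclosure_def zero_set_def by blast
  qed
  have g1: "G1f (y!0) (y!1) (y!2) (y!3) = 0"
    using van[OF pf_G1] G_vanish(1) by (simp add: ebar_eq)
  have g2: "G2f (y!0) (y!1) (y!2) (y!3) = 0"
    using van[OF pf_G2] G_vanish(2) by (simp add: ebar_eq)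
  have g3: "G3f (y!0) (y!1) (y!2) (y!3) = 0"
    using van[OF pf_G3] G_vanish(3) by (simp add: ebar_eq)
  have ne: "y!0 \<noteq> y!2" "y!0 \<noteq> 1" "y!2 \<noteq> 1" using g unfolding goodL_def by auto
  define d where "d = Dnf (y!0) (y!1) (y!2) (y!3) / (y!0 - y!2)"
  have C: "(y!0, y!2, d) \<in> Cbar" and tv: "tE (y!0) (y!2) d = y!1" "vE (y!0) (y!2) d = y!3"
    using G_conv[OF nz ne(1) g1 g2 g3] unfolding d_def by auto
  have ye: "y = ebar (y!0, y!2, d)" unfolding ebar_eq tv using list4[OF len] .
  have gi: "ginv y = Dmap (y!0) (y!2) d" using ginv_ebar[OF nz ne(1)] ye by metis
  have A: "Dmap (y!0) (y!2) d \<in> Dvar \<and> Psi (Dmap (y!0) (y!2) d) = ebar (y!0, y!2, d)"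
    by (rule lemA[OF C ne(2,3)])
  show ?thesis unfolding U0_def using A gi ye g by auto
qed

lemma U0_inv:
  assumes pU: "p \<in> U0" shows "ginv (Psi p) = p"
proof -
  have p0: "p \<in> Dvar" and g: "goodL (Psi p)" using pU unfolding U0_def by auto
  obtain w x y z where p: "p = mk w x y z" and
    s: "w \<noteq> 0" "w \<noteq> 1" "x \<noteq> 0" "x \<noteq> 1" "y \<noteq> 0" "y \<noteq> 1" "z \<noteq> 0" "z \<noteq> 1"
    and e1: "w*x*y*z = 1" and e: "(1-w)*(1-x) = w^2*x^2*(1-y)*(1-z)"
    using p0 unfolding Dvar_iff by blast
  define s0 where "s0 = (1/(1-x))*((z-1)/z)/y"
  define u0 where "u0 = (1/(1-w))*((z-1)/z)/y"
  define d0 where "d0 = s0*u0*(y-1)"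
  have C0: "(s0,u0,d0) \<in> Cbar" and PE: "Psi p = ebar (s0,u0,d0)" and DM: "Dmap s0 u0 d0 = p"
    using lemB[OF s e1 e] p unfolding s0_def u0_def d0_def by auto
  have ns: "s0 \<noteq> 0" "u0 \<noteq> 0" using C0 by (auto simp: Cbar_iff)
  have "s0 \<noteq> u0" using g unfolding PE goodL_def by (simp add: ebar_eq)
  then show ?thesis using ginv_ebar[OF ns] PE DM by simp
qed



lemma rat_Psi: "rational_on 12 4 U0 Psi"
  unfolding rational_on_def
proof (intro exI conjI)
  let ?ps = "[\<lambda>p. p!4*p!11, \<lambda>p. p!3*p!6, \<lambda>p. p!1*p!11, \<lambda>p::complex list. p!0*p!6]"
  let ?qs = "[\<lambda>p. p!6, \<lambda>p. 1, \<lambda>p. p!6, \<lambda>p::complex list. 1]"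
  show "length ?ps = 4" "length ?qs = 4" by simp_all
  show "\<forall>i<4. poly_fun 12 (?ps ! i) \<and> poly_fun 12 (?qs ! i) \<and> (\<forall>x\<in>U0. (?qs ! i) x \<noteq> 0)"
  proof (intro allI impI)
    fix i :: nat assume "i < 4"
    have p6: "\<forall>x\<in>U0. x!6 \<noteq> 0" using Dvar_torus unfolding U0_def torus_def by auto
    show "poly_fun 12 (?ps ! i) \<and> poly_fun 12 (?qs ! i) \<and> (\<forall>x\<in>U0. (?qs ! i) x \<noteq> 0)"
      using \<open>i < 4\<close> p6 by (auto dest!: less4 intro!: pf_intros)
  qed
  show "\<forall>x\<in>U0. Psi x = map (\<lambda>i. (?ps ! i) x / (?qs ! i) x) [0..<4]"
    by (simp add: Psi_def upt_rec)
qed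

definition psL :: "(complex list \<Rightarrow> complex) list" where
  "psL = [\<lambda>y. y!3*(y!0-y!2), \<lambda>y. y!0*y!1-y!2*y!3, \<lambda>y. y!3*(y!0-y!2) - (y!0*y!1-y!2*y!3),
          \<lambda>y. y!1*(y!0-y!2), \<lambda>y. y!0*y!1-y!2*y!3, \<lambda>y. y!1*(y!0-y!2) - (y!0*y!1-y!2*y!3),
          \<lambda>y. y!0*y!1-y!2*y!3, \<lambda>y. y!0-y!2, \<lambda>y. (y!0*y!1-y!2*y!3) - (y!0-y!2),
          \<lambda>y. y!0*y!1-y!2*y!3, \<lambda>y. y!1*y!3*(y!0-y!2), \<lambda>y. (y!0*y!1-y!2*y!3) - y!1*y!3*(y!0-y!2)]"
definition qsL :: "(complex list \<Rightarrow> complex) list" where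
  "qsL = [\<lambda>y. y!0*y!1-y!2*y!3, \<lambda>y. (y!0*y!1-y!2*y!3) - y!3*(y!0-y!2), \<lambda>y. y!3*(y!0-y!2),
          \<lambda>y. y!0*y!1-y!2*y!3, \<lambda>y. (y!0*y!1-y!2*y!3) - y!1*(y!0-y!2), \<lambda>y. y!1*(y!0-y!2),
          \<lambda>y. y!0-y!2, \<lambda>y. (y!0-y!2) - (y!0*y!1-y!2*y!3), \<lambda>y. y!0*y!1-y!2*y!3,
          \<lambda>y. y!1*y!3*(y!0-y!2), \<lambda>y. y!1*y!3*(y!0-y!2) - (y!0*y!1-y!2*y!3), \<lambda>y. y!0*y!1-y!2*y!3]"

lemma ginv_formula:
  fixes ys :: "complex list"
  defines "s \<equiv> ys!0" and "t \<equiv> ys!1" and "u \<equiv> ys!2" and "v \<equiv> ys!3"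
  defines "Y \<equiv> (s*t-u*v)/(s-u)"
  assumes su: "s \<noteq> u" and t0: "t \<noteq> 0" and v0: "v \<noteq> 0" and Y0: "Y \<noteq> 0" and Y1: "Y \<noteq> 1"
    and W1: "v/Y \<noteq> 1" and X1: "t/Y \<noteq> 1" and Z1: "Y/(t*v) \<noteq> 1"
  shows "(\<forall>i<12. (qsL!i) ys \<noteq> 0) \<and> ginv ys = map (\<lambda>i. (psL!i) ys / (qsL!i) ys) [0..<12]"
proof -
  define N where "N = s*t - u*v"
  define D where "D = s - u"
  have D0: "D \<noteq> 0" using su D_def by simp
  have YN: "Y = N/D" unfolding Y_def N_def D_def ..
  have N0: "N \<noteq> 0" using Y0 YN by auto
  have n1: "N - v*D \<noteq> 0" using W1 D0 N0 unfolding YN by (auto simp: field_simps)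
  have n2: "N - t*D \<noteq> 0" using X1 D0 N0 unfolding YN by (auto simp: field_simps)
  have n3: "D - N \<noteq> 0" using Y1 D0 unfolding YN by (auto simp: field_simps)
  have n4: "t*v*D - N \<noteq> 0" using Z1 D0 N0 t0 v0 unfolding YN by (auto simp: field_simps)
  have q: "\<forall>i<12. (qsL!i) ys \<noteq> 0"
  proof (intro allI impI)
    fix i :: nat assume "i < 12"
    then show "(qsL!i) ys \<noteq> 0"
      using N0 D0 n1 n2 n3 n4 t0 v0
      unfolding qsL_def N_def D_def s_def t_def u_def v_def
      by (auto dest!: less12 simp: right_diff_distrib)
  qed
  have m: "ginv ys = mk (v*D/N) (t*D/N) (N/D) (N/(t*v*D))"
    unfolding ginv_def Q_def s_def[symmetric] t_def[symmetric] u_def[symmetric] v_def[symmetric]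
      N_def[symmetric] D_def[symmetric]
    using N0 D0 t0 v0 by (simp add: field_simps)
  have "mk (v*D/N) (t*D/N) (N/D) (N/(t*v*D)) =
     [v*D/N, N/(N - v*D), (v*D - N)/(v*D), t*D/N, N/(N - t*D), (t*D - N)/(t*D),
      N/D, D/(D - N), (N - D)/N, N/(t*v*D), t*v*D/(t*v*D - N), (N - t*v*D)/N]"
    unfolding mk_def using N0 D0 n1 n2 n3 n4 t0 v0 by (simp add: field_simps)
  also have "\<dots> = map (\<lambda>i. (psL!i) ys / (qsL!i) ys) [0..<12]"
    unfolding psL_def qsL_def N_def D_def s_def t_def u_def v_def by (simp add: upt_rec)
  finally show ?thesis using q m by simp
qed



lemma V0_conds:
  assumes y: "y \<in> V0"
  defines "Y \<equiv> (y!0*y!1-y!2*y!3)/(y!0-y!2)"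
  shows "y!0 \<noteq> y!2 \<and> y!1 \<noteq> 0 \<and> y!3 \<noteq> 0 \<and> Y \<noteq> 0 \<and> Y \<noteq> 1 \<and> y!3/Y \<noteq> 1 \<and> y!1/Y \<noteq> 1 \<and> Y/(y!1*y!3) \<noteq> 1"
proof -
  have yE: "y \<in> E0bar" and g: "goodL y" using y unfolding V0_def by auto
  have yt: "y \<in> torus 4" using yE E0_torus by auto
  then have nz: "y!1 \<noteq> 0" "y!3 \<noteq> 0" unfolding torus_def by auto
  have "ginv y \<in> Dvar" using V0_pre[OF y] unfolding U0_def by auto
  then obtain w x y' z where m: "ginv y = mk w x y' z" and
    s: "w \<noteq> 0" "w \<noteq> 1" "x \<noteq> 0" "x \<noteq> 1" "y' \<noteq> 0" "y' \<noteq> 1" "z \<noteq> 0" "z \<noteq> 1"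
    unfolding Dvar_iff by blast
  have gq: "ginv y = mk (y!3/Y) (y!1/Y) Y (Y/(y!1*y!3))" unfolding ginv_def Q_def Y_def ..
  have mm: "mk (y!3/Y) (y!1/Y) Y (Y/(y!1*y!3)) = mk w x y' z" using gq m by simp
  have c: "y!3/Y = w" "y!1/Y = x" "Y = y'" "Y/(y!1*y!3) = z"
    using arg_cong[OF mm, of "\<lambda>l. l!0"] arg_cong[OF mm, of "\<lambda>l. l!3"]
      arg_cong[OF mm, of "\<lambda>l. l!6"] arg_cong[OF mm, of "\<lambda>l. l!9"]
    unfolding mk_def by simp_all
  show ?thesis using c s nz g unfolding goodL_def by auto
qed

lemma rat_ginv: "rational_on 4 12 V0 ginv"
  unfolding rational_on_def
proof (intro exI conjI)
  show "length psL = 12" "length qsL = 12" by (simp_all add: psL_def qsL_def)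
  show "\<forall>i<12. poly_fun 4 (psL ! i) \<and> poly_fun 4 (qsL ! i) \<and> (\<forall>x\<in>V0. (qsL ! i) x \<noteq> 0)"
  proof (intro allI impI conjI)
    fix i :: nat assume i: "i < 12"
    show "poly_fun 4 (psL ! i)" using i unfolding psL_def by (auto dest!: less12 intro!: pf_intros)
    show "poly_fun 4 (qsL ! i)" using i unfolding qsL_def by (auto dest!: less12 intro!: pf_intros)
    show "\<forall>x\<in>V0. (qsL ! i) x \<noteq> 0"
    proof
      fix x assume x: "x \<in> V0"
      show "(qsL ! i) x \<noteq> 0" using ginv_formula[of x] V0_conds[OF x] i by blast
    qed
  qed
  show "\<forall>x\<in>V0. ginv x = map (\<lambda>i. (psL ! i) x / (qsL ! i) x) [0..<12]"
  proof
    fix x assume x: "x \<in> V0"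
    show "ginv x = map (\<lambda>i. (psL ! i) x / (qsL ! i) x) [0..<12]"
      using ginv_formula[of x] V0_conds[OF x] by blast
  qed
qed

lemma bij_Psi: "bij_betw Psi U0 V0"
proof -
  have inj: "inj_on Psi U0" by (rule inj_on_inverseI[of _ ginv]) (rule U0_inv)
  have "Psi ` U0 \<subseteq> V0" using PsiD unfolding U0_def V0_def by auto
  moreover have "V0 \<subseteq> Psi ` U0"
  proof
    fix y assume "y \<in> V0"
    then have "ginv y \<in> U0" "Psi (ginv y) = y" using V0_pre by auto
    then show "y \<in> Psi ` U0" by (metis image_eqI)
  qed
  ultimately show ?thesis using inj unfolding bij_betw_def by blast
qed

theorem mainTheorem4:
  shows "birational_iso 12 Dvar 4 E0bar Psi"
  unfolding birational_iso_def
proof (intro conjI exI)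
  show "Psi ` Dvar \<subseteq> E0bar" using PsiD by auto
  show "open_dense_in 12 U0 Dvar"
    unfolding open_dense_in_def using zclosed_hD U0_eq D_dense by blast
  show "open_dense_in 4 V0 E0bar"
    unfolding open_dense_in_def using zclosed_hE V0_eq E_dense by blast
  show "bij_betw Psi U0 V0" by (rule bij_Psi)
  show "rational_on 12 4 U0 Psi" by (rule rat_Psi)
  show "rational_on 4 12 V0 ginv" by (rule rat_ginv)
  show "\<forall>x\<in>U0. ginv (Psi x) = x" using U0_inv by blast
  show "\<forall>y\<in>V0. Psi (ginv y) = y" using V0_pre by blast
qed

end
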